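(* Let $a,b$ be integers and let $G\in\mathscr{G}_{a,b}$ be a tricyclic graph with at least one pendant vertex. Suppose $C_p=vu_1u_2\ldots u_{p-1}v$ is an internal cycle of the base $\widetilde G$ with $N_{\widetilde G}(v)=\{w,u_1,u_{p-1}\}$. Then $d_G(v)=3$, $p=3$ and $G\in\mathscr{G}_{6,-1}$. Moreover, $d_G(w)=2$, and one of $u_1,u_{p-1}$ has degree $2$ in $G$ while the other has degree $a+b-1=4$ in $G$.
   Context: All graphs are simple and connected; $d_G(v)$ is the degree of $v$, $N_G(v)$ its neighbourhood. A tricyclic graph is a connected graph with $|E_G|=|V_G|+2$. For integers $a,b$, $\mathscr{G}_{a,b}$ is the set of connected graphs $G$ such that for every $v\in V_G$, $\sum_{u\in N_G(v)}d_G(u)=a\,d_G(v)+b-d_G(v)^2$. A pendant vertex is a vertex of degree $1$. The base $\widetilde{G}$ of $G$ is the subgraph obtained from $G$ by repeatedly deleting pendant vertices until none remain. An internal cycle of $\widetilde G$ is a cycle $u_0u_1\ldots u_k$ with $u_0=u_k$, $k\ge 3$, $d_{\widetilde G}(u_0)\ge 3$ and $d_{\widetilde G}(u_i)=2$ for $1\le i\le k-1$. *)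

theory Defs
  imports Main
begin

definition simple_graph :: "'a set \<Rightarrow> ('a \<Rightarrow> 'a \<Rightarrow> bool) \<Rightarrow> bool" where
  "simple_graph V E \<longleftrightarrow> finite V \<and> (\<forall>x y. E x y \<longrightarrow> E y x) \<and> (\<forall>x. \<not> E x x)
     \<and> (\<forall>x y. E x y \<longrightarrow> x \<in> V \<and> y \<in> V)"

definition connected_graph :: "'a set \<Rightarrow> ('a \<Rightarrow> 'a \<Rightarrow> bool) \<Rightarrow> bool" where
  "connected_graph V E \<longleftrightarrow> V \<noteq> {} \<and> (\<forall>x\<in>V. \<forall>y\<in>V. (\<lambda>u v. E u v \<and> u \<in> V \<and> v \<in> V)\<^sup>*\<^sup>* x y)"

definition nbhd :: "'a set \<Rightarrow> ('a \<Rightarrow> 'a \<Rightarrow> bool) \<Rightarrow> 'a \<Rightarrow> 'a set" where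
  "nbhd S E v = {u \<in> S. E v u}"

definition deg :: "'a set \<Rightarrow> ('a \<Rightarrow> 'a \<Rightarrow> bool) \<Rightarrow> 'a \<Rightarrow> nat" where
  "deg S E v = card (nbhd S E v)"

definition edges :: "'a set \<Rightarrow> ('a \<Rightarrow> 'a \<Rightarrow> bool) \<Rightarrow> 'a set set" where
  "edges V E = {{x, y} | x y. x \<in> V \<and> y \<in> V \<and> E x y}"

definition tricyclic :: "'a set \<Rightarrow> ('a \<Rightarrow> 'a \<Rightarrow> bool) \<Rightarrow> bool" where
  "tricyclic V E \<longleftrightarrow> simple_graph V E \<and> connected_graph V E \<and> card (edges V E) = card V + 2"

definition in_G_ab :: "int \<Rightarrow> int \<Rightarrow> 'a set \<Rightarrow> ('a \<Rightarrow> 'a \<Rightarrow> bool) \<Rightarrow> bool" where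
  "in_G_ab a b V E \<longleftrightarrow> simple_graph V E \<and> connected_graph V E \<and>
     (\<forall>v\<in>V. (\<Sum>u\<in>nbhd V E v. int (deg V E u)) = a * int (deg V E v) + b - int (deg V E v)^2)"

definition pendant :: "'a set \<Rightarrow> ('a \<Rightarrow> 'a \<Rightarrow> bool) \<Rightarrow> 'a \<Rightarrow> bool" where
  "pendant S E v \<longleftrightarrow> v \<in> S \<and> deg S E v = 1"

definition delete_pendant_step :: "('a \<Rightarrow> 'a \<Rightarrow> bool) \<Rightarrow> 'a set \<Rightarrow> 'a set \<Rightarrow> bool" where
  "delete_pendant_step E S S' \<longleftrightarrow> (\<exists>v. pendant S E v \<and> S' = S - {v})"

text \<open>B is (the vertex set of) a base of G: obtained from V by repeatedly deleting
  pendant vertices until none remain; the base is the subgraph induced on B.\<close>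
definition is_base :: "'a set \<Rightarrow> ('a \<Rightarrow> 'a \<Rightarrow> bool) \<Rightarrow> 'a set \<Rightarrow> bool" where
  "is_base V E B \<longleftrightarrow> (delete_pendant_step E)\<^sup>*\<^sup>* V B \<and> (\<forall>v\<in>B. \<not> pendant B E v)"

definition internal_cycle :: "'a set \<Rightarrow> ('a \<Rightarrow> 'a \<Rightarrow> bool) \<Rightarrow> (nat \<Rightarrow> 'a) \<Rightarrow> nat \<Rightarrow> bool" where
  "internal_cycle S E u k \<longleftrightarrow> k \<ge> 3 \<and> u k = u 0 \<and> (\<forall>i\<le>k. u i \<in> S)
     \<and> inj_on u {0..<k} \<and> (\<forall>i<k. E (u i) (u (Suc i)))
     \<and> deg S E (u 0) \<ge> 3 \<and> (\<forall>i. 1 \<le> i \<and> i \<le> k - 1 \<longrightarrow> deg S E (u i) = 2)"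

end

theory Submission
  imports Defs
begin


lemma sq_pos1: "(k::int)^2 - 5*k + 7 > 0"
proof -
  have "4*k^2 - 20*k + 28 = (2*k-5)^2 + 3" by (simp add: power2_eq_square algebra_simps)
  moreover have "(2*k-5)^2 \<ge> 0" by simp
  ultimately show ?thesis by linarith
qed

lemma sq_pos2: "(k::int)^2 - 4*k + 5 > 0"
proof -
  have "k^2 - 4*k + 5 = (k-2)^2 + 1" by (simp add: power2_eq_square algebra_simps)
  moreover have "(k-2)^2 \<ge> 0" by simp
  ultimately show ?thesis by linarith
qed

lemma no_sol1: "(k::int)^2 - 6*k + 7 \<noteq> 0"
proof
  assume h: "k^2 - 6*k + 7 = 0"
  have e: "k^2 - 6*k + 7 = (k-3)^2 - 2" by (simp add: power2_eq_square algebra_simps)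
  show False
  proof (cases "\<bar>k-3\<bar> \<le> 1")
    case True
    then have "k = 2 \<or> k = 3 \<or> k = 4" by auto
    then show False using h by auto
  next
    case False
    then have "\<bar>k-3\<bar> \<ge> 2" by simp
    then have "\<bar>k-3\<bar>*\<bar>k-3\<bar> \<ge> 2*2" by (meson mult_mono' abs_ge_zero order.trans zero_le_numeral mult_mono)
    then have "(k-3)^2 \<ge> 4" by (simp add: power2_eq_square abs_mult[symmetric])
    then show False using h e by linarith
  qed
qed

lemma no_sol2: "(k::int)^2 - 5*k + 5 \<noteq> 0"
proof
  assume h: "k^2 - 5*k + 5 = 0"
  have e: "4*k^2 - 20*k + 20 = (2*k-5)^2 - 5" by (simp add: power2_eq_square algebra_simps)
  show False
  proof (cases "\<bar>2*k-5\<bar> \<le> 2")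
    case True
    then have "k = 2 \<or> k = 3" by auto
    then show False using h by auto
  next
    case False
    then have "\<bar>2*k-5\<bar> \<ge> 3" by simp
    then have "\<bar>2*k-5\<bar>*\<bar>2*k-5\<bar> \<ge> 3*3" by (meson mult_mono' abs_ge_zero order.trans zero_le_numeral mult_mono)
    then have "(2*k-5)^2 \<ge> 9" by (simp add: power2_eq_square abs_mult[symmetric])
    then show False using h e by linarith
  qed
qed

lemma prod_small:
  fixes q c n :: int
  assumes "q * c = n" "c \<ge> 2" "n > 0"
  shows "q \<ge> 1 \<and> (q \<ge> 2 \<longrightarrow> n \<ge> 2*c)"
proof
  show "q \<ge> 1"
  proof (rule ccontr)
    assume "\<not> q \<ge> 1" then have "q \<le> 0" by simp
    then have "q * c \<le> 0" using assms(2) by (simp add: mult_nonpos_nonneg)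
    then show False using assms by simp
  qed
  show "q \<ge> 2 \<longrightarrow> n \<ge> 2*c"
  proof
    assume "q \<ge> 2"
    then have "q*c \<ge> 2*c" using assms(2) by (intro mult_right_mono) auto
    then show "n \<ge> 2*c" using assms by simp
  qed
qed

definition AH :: "(nat \<Rightarrow> int) \<Rightarrow> nat \<Rightarrow> int \<Rightarrow> int \<Rightarrow> int \<Rightarrow> int \<Rightarrow> int \<Rightarrow> bool" where
  "AH D p k a b dw tv \<longleftrightarrow> p \<ge> 3 \<and> k \<ge> 3 \<and> a + b - 1 = k
    \<and> (\<forall>i. 1 \<le> i \<and> i \<le> p - 1 \<longrightarrow> (D i = 2 \<or> D i = k)
          \<and> D (i - 1) + D (i + 1) + D i - 2 = a * D i + b - (D i)^2)
    \<and> D p = D 0 \<and> tv \<ge> 0 \<and> D 0 = 3 + tv \<and> (tv > 0 \<longrightarrow> D 0 = k)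
    \<and> dw \<ge> 2 \<and> dw + D 1 + D (p - 1) + tv = a * D 0 + b - (D 0)^2"

lemma AH_L1:
  assumes H: "AH D p k a b dw tv" and D1: "D 1 = 2"
  shows "D 0 = 3 \<and> p = 3 \<and> a = 6 \<and> b = -1 \<and> dw = 2 \<and> D (p - 1) = 4"
proof -
  have p3: "p \<ge> 3" and k3: "k \<ge> 3" and kab: "a + b - 1 = k"
    and I: "\<And>i. 1 \<le> i \<Longrightarrow> i \<le> p - 1 \<Longrightarrow> (D i = 2 \<or> D i = k)
          \<and> D (i - 1) + D (i + 1) + D i - 2 = a * D i + b - (D i)^2"
    and Dp: "D p = D 0" and tv0: "tv \<ge> 0" and D0: "D 0 = 3 + tv" and tvk: "tv > 0 \<Longrightarrow> D 0 = k"
    and dw2: "dw \<ge> 2" and dwe: "dw + D 1 + D (p - 1) + tv = a * D 0 + b - (D 0)^2"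
    using H unfolding AH_def by auto
  have I1: "D 0 + D 2 + D 1 - 2 = a * D 1 + b - (D 1)^2" using I[of 1] p3 by (simp add: numeral_2_eq_2)
  have I2: "(D 2 = 2 \<or> D 2 = k) \<and> D 1 + D 3 + D 2 - 2 = a * D 2 + b - (D 2)^2"
    using I[of 2] p3 by (simp add: numeral_eq_Suc)
  have Ipm: "D (p - 1) = 2 \<or> D (p - 1) = k" using I[of "p - 1"] p3 by simp
  have I3: "p \<ge> 4 \<Longrightarrow> D 3 = 2 \<or> D 3 = k" using I[of 3] by simp
  have D3p: "p = 3 \<Longrightarrow> D 3 = D 0" using Dp by simp
  show ?thesis
  proof (cases "tv = 0")
    case True
    then have d0: "D 0 = 3" using D0 by simp
    have I1': "3 + D 2 = 2*a + b - 4" using I1 d0 D1 by simp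
    have dwe': "dw + 2 + D (p - 1) = 3*a + b - 9" using dwe d0 D1 True by simp
    have D2k: "D 2 = k"
    proof (rule ccontr)
      assume "D 2 \<noteq> k" then have "D 2 = 2" using I2 by auto
      then show False using I1' dwe' kab Ipm k3 dw2 by auto
    qed
    have a6: "a = 6" using I1' D2k kab by linarith
    have eq2: "2 + D 3 + k - 2 = 6*k + b - k^2" using I2 D2k D1 a6 by simp
    show ?thesis
    proof (cases "p = 3")
      case True
      then have "D 3 = 3" using D3p d0 by simp
      then have "(k-2)*(k-4) = 0" using eq2 kab a6 by (simp add: power2_eq_square algebra_simps)
      then have k4: "k = 4" using k3 by auto
      then show ?thesis using True d0 a6 kab dwe' D2k by auto
    next
      case False
      then have "D 3 = 2 \<or> D 3 = k" using I3 p3 by simp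
      moreover have "k^2 - 6*k + 7 \<noteq> 0" by (rule no_sol1)
      moreover have "k^2 - 5*k + 5 \<noteq> 0" by (rule no_sol2)
      ultimately show ?thesis using eq2 kab a6 by auto
    qed
  next
    case False
    then have tvp: "tv > 0" using tv0 by simp
    then have d0: "D 0 = k" using tvk by simp
    have k4: "k \<ge> 4" using d0 D0 tvp by simp
    have I1': "k + D 2 = 2*a + b - 4" using I1 d0 D1 by simp
    have dwe': "dw + 2 + D (p - 1) + (k - 3) = a*k + b - k^2" using dwe d0 D1 D0 by simp
    show ?thesis
    proof (cases "D 2 = k")
      case False
      then have "D 2 = 2" using I2 by auto
      then have a5: "a = 5" using I1' kab by simp
      have "dw + 2 + D (p - 1) + (k - 3) = 5*k + b - k^2" using dwe' a5 by simp
      then show ?thesis using sq_pos1[of k] Ipm k3 dw2 kab a5 by auto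
    next
      case True
      have a: "a = k + 3" using I1' True kab by simp
      have b: "b = -2" using a kab by simp
      have "2 + D 3 + k - 2 = (k+3)*k - 2 - k^2" using I2 True D1 a b by simp
      then have D3: "D 3 = 2*k - 2" by (simp add: power2_eq_square algebra_simps)
      show ?thesis
      proof (cases "p = 3")
        case True then show ?thesis using D3 D3p d0 k3 by simp
      next
        case False then show ?thesis using D3 I3 p3 k3 by auto
      qed
    qed
  qed
qed

lemma AH_L2:
  assumes H: "AH D p k a b dw tv" and D1: "D 1 = k" and Dpm: "D (p - 1) = k"
  shows False
proof -
  have p3: "p \<ge> 3" and k3: "k \<ge> 3" and kab: "a + b - 1 = k"
    and I: "\<And>i. 1 \<le> i \<Longrightarrow> i \<le> p - 1 \<Longrightarrow> (D i = 2 \<or> D i = k)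
          \<and> D (i - 1) + D (i + 1) + D i - 2 = a * D i + b - (D i)^2"
    and Dp: "D p = D 0" and tv0: "tv \<ge> 0" and D0: "D 0 = 3 + tv" and tvk: "tv > 0 \<Longrightarrow> D 0 = k"
    and dw2: "dw \<ge> 2" and dwe: "dw + D 1 + D (p - 1) + tv = a * D 0 + b - (D 0)^2"
    using H unfolding AH_def by auto
  have I1: "D 0 + D 2 + D 1 - 2 = a * D 1 + b - (D 1)^2" using I[of 1] p3 by (simp add: numeral_2_eq_2)
  have I2: "D 2 = 2 \<or> D 2 = k"
    using I[of 2] p3 by (simp add: numeral_eq_Suc)
  show ?thesis
  proof (cases "tv = 0")
    case True
    then have d0: "D 0 = 3" using D0 by simp
    have I1': "3 + D 2 + k - 2 = a*k + b - k^2" using I1 d0 D1 by simp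
    have dwe': "dw + 2*k = 3*a + b - 9" using dwe d0 D1 Dpm True by simp
    show False
    proof (cases "D 2 = k")
      case True
      have "(a - k - 2) * (k - 1) = 2" using I1' True kab
        by (simp add: power2_eq_square algebra_simps)
      from prod_small[OF this] k3 have "a - k - 2 = 1" by auto
      then have "(k - 1) = 2" using \<open>(a - k - 2) * (k - 1) = 2\<close> by simp
      then show False using \<open>a - k - 2 = 1\<close> dwe' kab dw2 by linarith
    next
      case False
      then have D2: "D 2 = 2" using I2 by simp
      have "(a - k - 1) * (k - 1) = 3" using I1' D2 kab
        by (simp add: power2_eq_square algebra_simps)
      from prod_small[OF this] k3 have "a - k - 1 = 1" by auto
      then have "(k - 1) = 3" using \<open>(a - k - 1) * (k - 1) = 3\<close> by simp
      then show False using \<open>a - k - 1 = 1\<close> dwe' kab dw2 by linarith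
    qed
  next
    case False
    then have tvp: "tv > 0" using tv0 by simp
    then have d0: "D 0 = k" using tvk by simp
    have I1': "k + D 2 + k - 2 = a*k + b - k^2" using I1 d0 D1 by simp
    have dwe': "dw + 2*k + tv = a*k + b - k^2" using dwe d0 D1 Dpm by simp
    show False using I1' dwe' D0 d0 dw2 I2 k3 by auto
  qed
qed

lemma AH_rev:
  assumes H: "AH D p k a b dw tv"
  shows "AH (\<lambda>i. D (p - i)) p k a b dw tv"
proof -
  have p3: "p \<ge> 3" and k3: "k \<ge> 3" and kab: "a + b - 1 = k"
    and I: "\<And>i. 1 \<le> i \<Longrightarrow> i \<le> p - 1 \<Longrightarrow> (D i = 2 \<or> D i = k)
          \<and> D (i - 1) + D (i + 1) + D i - 2 = a * D i + b - (D i)^2"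
    and Dp: "D p = D 0" and tv0: "tv \<ge> 0" and D0: "D 0 = 3 + tv" and tvk: "tv > 0 \<Longrightarrow> D 0 = k"
    and dw2: "dw \<ge> 2" and dwe: "dw + D 1 + D (p - 1) + tv = a * D 0 + b - (D 0)^2"
    using H unfolding AH_def by auto
  have I': "(D (p - i) = 2 \<or> D (p - i) = k)
          \<and> D (p - (i - 1)) + D (p - (i + 1)) + D (p - i) - 2 = a * D (p - i) + b - (D (p - i))^2"
    if "1 \<le> i" "i \<le> p - 1" for i
  proof -
    have e1: "p - (i - 1) = (p - i) + 1" and e2: "p - (i + 1) = (p - i) - 1" using that p3 by auto
    have h1: "D (p - i) = 2 \<or> D (p - i) = k" and
      h2: "D (p - i - 1) + D (p - i + 1) + D (p - i) - 2 = a * D (p - i) + b - (D (p - i))^2"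
      using I[of "p - i"] that by auto
    show ?thesis using h1 h2 unfolding e1 e2 by linarith
  qed
  have "p - (p - 1) = 1" using p3 by simp
  then show ?thesis unfolding AH_def using p3 k3 kab I' Dp tv0 D0 tvk dw2 dwe by auto
qed

lemma AH_main:
  assumes H: "AH D p k a b dw tv"
  shows "D 0 = 3 \<and> p = 3 \<and> a = 6 \<and> b = -1 \<and> dw = 2 \<and>
     ((D 1 = 2 \<and> D (p - 1) = 4) \<or> (D (p - 1) = 2 \<and> D 1 = 4))"
proof -
  have p3: "p \<ge> 3" and I: "\<And>i. 1 \<le> i \<Longrightarrow> i \<le> p - 1 \<Longrightarrow> (D i = 2 \<or> D i = k)"
    and Dp: "D p = D 0"
    using H unfolding AH_def by auto
  have c1: "D 1 = 2 \<or> D 1 = k" using I[of 1] p3 by simp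
  have c2: "D (p - 1) = 2 \<or> D (p - 1) = k" using I[of "p - 1"] p3 by simp
  show ?thesis
  proof (cases "D 1 = 2")
    case True then show ?thesis using AH_L1[OF H] by auto
  next
    case False
    then have "D 1 = k" using c1 by simp
    show ?thesis
    proof (cases "D (p - 1) = 2")
      case True
      have "p - (p - 1) = 1" using p3 by simp
      have "(\<lambda>i. D (p - i)) 1 = 2" using True by simp
      from AH_L1[OF AH_rev[OF H] this] \<open>p - (p - 1) = 1\<close> True Dp show ?thesis by auto
    next
      case False
      then show ?thesis using c2 AH_L2[OF H \<open>D 1 = k\<close>] by auto
    qed
  qed
qed



lemma nb_sub: "simple_graph V E \<Longrightarrow> nbhd S E x \<subseteq> V"
  unfolding simple_graph_def nbhd_def by auto

lemma nb_fin: "simple_graph V E \<Longrightarrow> finite (nbhd S E x)"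
  using nb_sub[of V E S x] unfolding simple_graph_def by (auto intro: finite_subset)

lemma nb_mono: "S \<subseteq> T \<Longrightarrow> nbhd S E x \<subseteq> nbhd T E x"
  unfolding nbhd_def by auto

lemma deg_mono: "simple_graph V E \<Longrightarrow> S \<subseteq> T \<Longrightarrow> deg S E x \<le> deg T E x"
  unfolding deg_def by (intro card_mono nb_fin nb_mono) auto

lemma pend_nb:
  assumes "simple_graph V E" "deg V E x = 1" "E x y"
  shows "nbhd V E x = {y}"
proof -
  have "y \<in> nbhd V E x" using assms unfolding simple_graph_def nbhd_def by auto
  moreover obtain c where "nbhd V E x = {c}" using assms(2) unfolding deg_def by (auto simp: card_1_singleton_iff)
  ultimately show ?thesis by auto
qed

lemma conn_closed:
  assumes "connected_graph V E" "x \<in> C" "x \<in> V" "\<forall>u\<in>C. \<forall>w. E u w \<longrightarrow> w \<in> C" "y \<in> V"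
  shows "y \<in> C"
proof -
  have "(\<lambda>u v. E u v \<and> u \<in> V \<and> v \<in> V)\<^sup>*\<^sup>* x y" using assms(1,3,5) unfolding connected_graph_def by auto
  then show ?thesis
    by (induction rule: rtranclp_induct) (use assms(2,4) in auto)
qed

lemma CL:
  assumes S: "simple_graph V E" and C: "connected_graph V E" and yV: "y \<in> V" and zV: "z \<in> V"
    and hy: "\<forall>u. E y u \<longrightarrow> u = z \<or> deg V E u = 1"
    and hz: "\<forall>u. E z u \<longrightarrow> u = y \<or> deg V E u = 1"
    and xV: "x \<in> V"
  shows "x = y \<or> x = z \<or> deg V E x = 1"
proof -
  let ?C = "{y, z} \<union> Collect (E y) \<union> Collect (E z)"
  have sym: "\<And>s t. E s t \<Longrightarrow> E t s" and inV: "\<And>s t. E s t \<Longrightarrow> t \<in> V"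
    using S unfolding simple_graph_def by blast+
  have cl: "\<forall>u\<in>?C. \<forall>w. E u w \<longrightarrow> w \<in> ?C"
  proof (intro ballI allI impI)
    fix u w assume u: "u \<in> ?C" and e: "E u w"
    show "w \<in> ?C"
    proof (cases "u = y \<or> u = z")
      case True then show ?thesis using e by auto
    next
      case False
      then have "E y u \<or> E z u" using u by auto
      then show ?thesis
      proof
        assume "E y u"
        then have "deg V E u = 1" using hy False by auto
        then have "nbhd V E u = {y}" using pend_nb[OF S] sym \<open>E y u\<close> by blast
        then have "w = y" using e inV unfolding nbhd_def by auto
        then show ?thesis by auto
      next
        assume "E z u"
        then have "deg V E u = 1" using hz False by auto
        then have "nbhd V E u = {z}" using pend_nb[OF S] sym \<open>E z u\<close> by blast
        then have "w = z" using e inV unfolding nbhd_def by auto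
        then show ?thesis by auto
      qed
    qed
  qed
  have "x \<in> ?C" using conn_closed[OF C _ yV cl xV] by auto
  then show ?thesis using hy hz by auto
qed

lemma sum_ge_card:
  fixes f :: "'b \<Rightarrow> int"
  assumes "finite A" "\<forall>x\<in>A. f x \<ge> 1"
  shows "sum f A \<ge> int (card A)"
proof -
  have "sum (\<lambda>_. 1::int) A \<le> sum f A" using assms by (intro sum_mono) auto
  then show ?thesis by simp
qed

lemma sum_eq_card:
  fixes f :: "'b \<Rightarrow> int"
  assumes "finite A" "\<forall>x\<in>A. f x \<ge> 1" "sum f A = int (card A)" "x \<in> A"
  shows "f x = 1"
proof -
  have "sum (\<lambda>y. f y - 1) A = 0" using assms(3) by (simp add: sum_subtractf)
  then have "\<forall>y\<in>A. f y - 1 = 0" using assms(1,2) by (subst sum_nonneg_eq_0_iff[symmetric]) auto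
  then show ?thesis using assms(4) by auto
qed

lemma arithA:
  fixes a b k m s :: int
  assumes k2: "k \<ge> 2" and m2: "m \<ge> 2" and kab: "a + b - 1 = k"
    and e1: "m + k - 1 = a*k + b - k^2" and e2: "k + s = a*m + b - m^2" and sge: "s \<ge> m - 1"
  shows "s = m - 1"
proof -
  have b: "b = k + 1 - a" using kab by simp
  have "(a - m - 2) * (m - 1) = s - (m - 1)" using e2 b by (simp add: power2_eq_square algebra_simps)
  then have "(a - m - 2) * (m - 1) \<ge> 0" using sge by simp
  then have am: "a - m - 2 \<ge> 0" using m2 by (simp add: zero_le_mult_iff)
  have mdef: "m = a*k - a - k^2 + 2" using e1 b by (simp add: algebra_simps)
  have "a = m + 2"
  proof (cases "k = 2")
    case True then show ?thesis using mdef am by (simp add: power2_eq_square)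
  next
    case False
    then have k3: "k \<ge> 3" using k2 by simp
    have "(a - k - 2) * (k - 2) = (m + 2) - a"
      using mdef by (simp add: power2_eq_square algebra_simps)
    then have "(a - k - 2) * (k - 2) \<le> 0" using am by simp
    then have h1: "a - k - 2 \<le> 0" using k3 by (simp add: mult_le_0_iff)
    have "(a - k - 1) * (k - 1) = m - 1"
      using mdef by (simp add: power2_eq_square algebra_simps)
    then have "(a - k - 1) * (k - 1) > 0" using m2 by simp
    then have h2: "a - k - 1 > 0" using k3 by (simp add: zero_less_mult_iff)
    have ak: "a = k + 2" using h1 h2 by simp
    then have "m = k" using mdef by (simp add: power2_eq_square algebra_simps)
    then show ?thesis using ak by simp
  qed
  then show ?thesis using e2 b by (simp add: power2_eq_square algebra_simps)
qed



locale cfg =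
  fixes a b :: int and V :: "'a set" and E :: "'a \<Rightarrow> 'a \<Rightarrow> bool"
    and B :: "'a set" and u :: "nat \<Rightarrow> 'a" and p :: nat and v w :: 'a
  assumes G: "in_G_ab a b V E"
    and pend: "\<exists>x\<in>V. pendant V E x"
    and base: "is_base V E B"
    and cyc: "internal_cycle B E u p"
    and u0: "u 0 = v"
    and nbv: "nbhd B E v = {w, u 1, u (p - 1)}"
begin

abbreviation "d x \<equiv> deg V E x"

lemma S: "simple_graph V E" and C: "connected_graph V E"
  using G unfolding in_G_ab_def by auto

lemma SG: "x \<in> V \<Longrightarrow> (\<Sum>y\<in>nbhd V E x. int (d y)) = a * int (d x) + b - int (d x)^2"
  using G unfolding in_G_ab_def by auto

lemma sym: "E s t \<Longrightarrow> E t s" and inV1: "E s t \<Longrightarrow> s \<in> V" and inV2: "E s t \<Longrightarrow> t \<in> V"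
  and irr: "\<not> E s s"
  using S unfolding simple_graph_def by blast+

lemma finV: "finite V" using S unfolding simple_graph_def by auto

lemma B_sub: "B \<subseteq> V"
proof -
  have "(delete_pendant_step E)\<^sup>*\<^sup>* V B" using base unfolding is_base_def by auto
  then show ?thesis
    by (induction rule: rtranclp_induct) (auto simp: delete_pendant_step_def)
qed

lemma B_np: "x \<in> B \<Longrightarrow> deg B E x \<noteq> 1"
  using base unfolding is_base_def pendant_def by auto

lemma p3: "p \<ge> 3" and up: "u p = u 0" and uB: "\<And>i. i \<le> p \<Longrightarrow> u i \<in> B"
  and uinj: "inj_on u {0..<p}" and uE: "\<And>i. i < p \<Longrightarrow> E (u i) (u (Suc i))"
  and degv: "deg B E (u 0) \<ge> 3" and degi: "\<And>i. 1 \<le> i \<Longrightarrow> i \<le> p - 1 \<Longrightarrow> deg B E (u i) = 2"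
  using cyc unfolding internal_cycle_def by auto

lemma dge: "x \<in> B \<Longrightarrow> deg B E x \<le> d x"
  using deg_mono[OF S B_sub] by auto

lemma three: "v \<in> V" "u 1 \<in> V" "u (p - 1) \<in> V" "v \<noteq> u 1" "v \<noteq> u (p - 1)" "u 1 \<noteq> u (p - 1)"
  "d v \<ge> 2" "d (u 1) \<ge> 2" "d (u (p - 1)) \<ge> 2"
proof -
  show "v \<in> V" "u 1 \<in> V" "u (p - 1) \<in> V" using uB[of 0] uB[of 1] uB[of "p - 1"] p3 u0 B_sub by auto
  have i: "\<And>i j. i < p \<Longrightarrow> j < p \<Longrightarrow> i \<noteq> j \<Longrightarrow> u i \<noteq> u j"
    using uinj unfolding inj_on_def by auto
  show "v \<noteq> u 1" "v \<noteq> u (p - 1)" "u 1 \<noteq> u (p - 1)" using i[of 0 1] i[of 0 "p - 1"] i[of 1 "p - 1"] p3 u0 by auto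
  show "d v \<ge> 2" using dge[of v] degv uB[of 0] u0 by auto
  show "d (u 1) \<ge> 2" using dge[of "u 1"] degi[of 1] uB[of 1] p3 by auto
  show "d (u (p - 1)) \<ge> 2" using dge[of "u (p - 1)"] degi[of "p - 1"] uB[of "p - 1"] p3 by auto
qed

lemma noCL:
  assumes "y \<in> V" "z \<in> V" "\<forall>t. E y t \<longrightarrow> t = z \<or> d t = 1" "\<forall>t. E z t \<longrightarrow> t = y \<or> d t = 1"
  shows False
proof -
  have "\<And>x. x \<in> V \<Longrightarrow> d x \<ge> 2 \<Longrightarrow> x = y \<or> x = z"
    using CL[OF S C assms] by fastforce
  then show False using three by metis
qed

lemma pend_val: "d x = 1 \<Longrightarrow> E x y \<Longrightarrow> int (d y) = a + b - 1"
proof -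
  assume h: "d x = 1" "E x y"
  have "nbhd V E x = {y}" using pend_nb[OF S h] .
  then show ?thesis using SG[of x] inV1[OF h(2)] h by simp
qed

lemma lemA:
  assumes yV: "y \<in> V" and yz: "E y z" and hy: "\<forall>t. E y t \<longrightarrow> t \<noteq> z \<longrightarrow> d t = 1"
    and yx: "E y x" and xz: "x \<noteq> z"
  shows False
proof -
  define k where "k = int (d y)"
  have dx: "d x = 1" using hy yx xz by auto
  have kab: "a + b - 1 = k" using pend_val[OF dx sym[OF yx]] k_def by simp
  have zV: "z \<in> V" using inV2[OF yz] .
  let ?R = "nbhd V E y - {z}"
  have finR: "finite ?R" using nb_fin[OF S] by auto
  have zin: "z \<in> nbhd V E y" using yz zV unfolding nbhd_def by auto
  have xin: "x \<in> ?R" using yx inV2[OF yx] xz unfolding nbhd_def by auto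
  have Ny: "nbhd V E y = insert z ?R" using zin by auto
  have R1: "\<forall>t\<in>?R. d t = 1" using hy unfolding nbhd_def by auto
  have cy: "d y = Suc (card ?R)" unfolding deg_def using Ny finR by (metis card_insert_disjoint Diff_iff insertI1)
  have sR: "(\<Sum>t\<in>?R. int (d t)) = int (card ?R)" using R1 by simp
  have Sy: "(\<Sum>t\<in>nbhd V E y. int (d t)) = int (d z) + int (card ?R)"
    using Ny finR sR by (metis sum.insert Diff_iff insertI1)
  have "card ?R > 0" using xin finR by (auto simp: card_gt_0_iff)
  then have k2: "k \<ge> 2" using cy k_def by simp
  define m where "m = int (d z)"
  have e1: "m + k - 1 = a*k + b - k^2" using SG[OF yV] Sy cy unfolding k_def m_def by simp
  have yinz: "y \<in> nbhd V E z" using sym[OF yz] yV unfolding nbhd_def by auto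
  let ?Q = "nbhd V E z - {y}"
  have finQ: "finite ?Q" using nb_fin[OF S] by auto
  have Nz: "nbhd V E z = insert y ?Q" using yinz by auto
  have cz: "d z = Suc (card ?Q)" unfolding deg_def using Nz finQ by (metis card_insert_disjoint Diff_iff insertI1)
  have Q1: "\<forall>t\<in>?Q. int (d t) \<ge> 1"
  proof
    fix t assume "t \<in> ?Q"
    then have "z \<in> nbhd V E t" using sym zV unfolding nbhd_def by auto
    then have "nbhd V E t \<noteq> {}" by auto
    then show "int (d t) \<ge> 1" unfolding deg_def using nb_fin[OF S] by (simp add: Suc_leI card_gt_0_iff)
  qed
  define s where "s = (\<Sum>t\<in>?Q. int (d t))"
  have Sz: "(\<Sum>t\<in>nbhd V E z. int (d t)) = k + s"
    using Nz finQ unfolding s_def k_def by (metis sum.insert Diff_iff insertI1)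
  have e2: "k + s = a*m + b - m^2" using SG[OF zV] Sz unfolding m_def by simp
  have sge: "s \<ge> int (card ?Q)" unfolding s_def using sum_ge_card[OF finQ Q1] .
  have hz: "\<forall>t. E z t \<longrightarrow> t = y \<or> d t = 1"
  proof (cases "m \<ge> 2")
    case True
    have "s = m - 1" using arithA[OF k2 True kab e1 e2] sge cz m_def by simp
    then have "s = int (card ?Q)" using cz m_def by simp
    then have "\<forall>t\<in>?Q. int (d t) = 1" using sum_eq_card[OF finQ Q1] unfolding s_def by blast
    then show ?thesis using inV2 unfolding nbhd_def by fastforce
  next
    case False
    then have "card ?Q = 0" using cz m_def by simp
    then have "?Q = {}" using finQ by simp
    then show ?thesis using inV2 unfolding nbhd_def by fastforce
  qed
  show False using noCL[OF yV zV _ hz] hy by blast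
qed

lemma depth1_gen: "(delete_pendant_step E)\<^sup>*\<^sup>* V S \<Longrightarrow> S \<subseteq> V \<and> (\<forall>x\<in>V - S. d x = 1)"
proof (induction rule: rtranclp_induct)
  case base then show ?case by simp
next
  case (step S S')
  obtain x where px: "pendant S E x" and S': "S' = S - {x}"
    using step.hyps(2) unfolding delete_pendant_step_def by auto
  have xS: "x \<in> S" and dS: "deg S E x = 1" using px unfolding pendant_def by auto
  obtain z where Nz: "nbhd S E x = {z}" using dS unfolding deg_def by (auto simp: card_1_singleton_iff)
  have xV: "x \<in> V" using xS step.IH by auto
  have xz: "E x z" using Nz unfolding nbhd_def by auto
  have "d x = 1"
  proof (rule ccontr)
    assume ne: "d x \<noteq> 1"
    have "deg S E x \<le> d x" using deg_mono[OF S] step.IH by auto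
    then have "d x \<ge> 2" using ne dS by simp
    have "\<not> nbhd V E x \<subseteq> {z}"
    proof
      assume "nbhd V E x \<subseteq> {z}"
      then have "d x \<le> card {z}" unfolding deg_def by (intro card_mono) auto
      then show False using \<open>d x \<ge> 2\<close> by simp
    qed
    then obtain y where yN: "y \<in> nbhd V E x" and yz: "y \<noteq> z" by auto
    have hy: "\<forall>t. E x t \<longrightarrow> t \<noteq> z \<longrightarrow> d t = 1"
    proof (intro allI impI)
      fix t assume "E x t" "t \<noteq> z"
      then have "t \<notin> S" using Nz unfolding nbhd_def by auto
      moreover have "t \<in> V" using inV2[OF \<open>E x t\<close>] .
      ultimately show "d t = 1" using step.IH by auto
    qed
    show False using lemA[OF xV xz hy _ yz] yN unfolding nbhd_def by auto
  qed
  then show ?case using step.IH S' by auto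
qed

lemma out_pend: "x \<in> V \<Longrightarrow> x \<notin> B \<Longrightarrow> d x = 1"
  using depth1_gen base unfolding is_base_def by auto

definition "kk = a + b - 1"

lemma k3: "kk \<ge> 3"
proof -
  obtain x0 where x0V: "x0 \<in> V" and dx0: "d x0 = 1" using pend unfolding pendant_def by auto
  obtain y where Nx0: "nbhd V E x0 = {y}" using dx0 unfolding deg_def by (auto simp: card_1_singleton_iff)
  have xy: "E x0 y" using Nx0 unfolding nbhd_def by auto
  have yV: "y \<in> V" using inV2[OF xy] .
  have kv: "int (d y) = kk" using pend_val[OF dx0 xy] kk_def by simp
  have hx: "\<forall>t. E x0 t \<longrightarrow> t = y \<or> d t = 1" using Nx0 inV2 unfolding nbhd_def by auto
  have dy1: "d y \<noteq> 1"
  proof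
    assume "d y = 1"
    then have "nbhd V E y = {x0}" using pend_nb[OF S _ sym[OF xy]] by simp
    then have "\<forall>t. E y t \<longrightarrow> t = x0 \<or> d t = 1" using inV2 unfolding nbhd_def by auto
    then show False using noCL[OF x0V yV hx] by simp
  qed
  have yB: "y \<in> B" using out_pend[OF yV] dy1 by auto
  have x0B: "x0 \<notin> B"
  proof
    assume "x0 \<in> B"
    have "nbhd B E x0 = {y}" using nb_mono[OF B_sub, of E x0] Nx0 yB xy unfolding nbhd_def by auto
    then show False using B_np[OF \<open>x0 \<in> B\<close>] unfolding deg_def by simp
  qed
  have "deg B E y \<noteq> 0"
  proof
    assume "deg B E y = 0"
    then have "nbhd B E y = {}" using nb_fin[OF S] unfolding deg_def by auto
    then have "\<forall>t. E y t \<longrightarrow> t = y \<or> d t = 1" using out_pend inV2 unfolding nbhd_def by blast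
    then show False using noCL[OF yV yV] by blast
  qed
  then have dB: "deg B E y \<ge> 2" using B_np[OF yB] by simp
  have "insert x0 (nbhd B E y) \<subseteq> nbhd V E y" using nb_mono[OF B_sub, of E y] sym[OF xy] x0V
    unfolding nbhd_def by auto
  then have "card (insert x0 (nbhd B E y)) \<le> d y" unfolding deg_def using nb_fin[OF S] by (intro card_mono) auto
  moreover have "x0 \<notin> nbhd B E y" using x0B unfolding nbhd_def by auto
  ultimately have "d y \<ge> 3" using dB nb_fin[OF S] unfolding deg_def by simp
  then show ?thesis using kv by simp
qed

definition "tt x = card (nbhd V E x - B)"

lemma un: "x \<in> B \<Longrightarrow> nbhd V E x = nbhd B E x \<union> (nbhd V E x - B)"
  using B_sub unfolding nbhd_def by auto

lemma dj: "nbhd B E x \<inter> (nbhd V E x - B) = {}" unfolding nbhd_def by auto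

lemma decomp1: "x \<in> B \<Longrightarrow> d x = deg B E x + tt x"
proof -
  assume xB: "x \<in> B"
  have f1: "finite (nbhd B E x)" and f2: "finite (nbhd V E x - B)" using nb_fin[OF S] by auto
  have "card (nbhd B E x \<union> (nbhd V E x - B)) = card (nbhd B E x) + card (nbhd V E x - B)"
    by (rule card_Un_disjoint[OF f1 f2 dj])
  then show ?thesis unfolding deg_def tt_def using un[OF xB] by simp
qed

lemma one: "(\<Sum>y\<in>nbhd V E x - B. int (d y)) = int (tt x)"
proof -
  have "\<And>y. y \<in> nbhd V E x - B \<Longrightarrow> int (d y) = 1"
  proof -
    fix y assume "y \<in> nbhd V E x - B"
    then have "y \<in> V" "y \<notin> B" unfolding nbhd_def by auto
    then show "int (d y) = 1" using out_pend by simp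
  qed
  then have "(\<Sum>y\<in>nbhd V E x - B. int (d y)) = (\<Sum>y\<in>nbhd V E x - B. 1)" by (rule sum.cong[OF refl])
  then show ?thesis unfolding tt_def by simp
qed

lemma decomp2: "x \<in> B \<Longrightarrow> (\<Sum>y\<in>nbhd V E x. int (d y)) = (\<Sum>y\<in>nbhd B E x. int (d y)) + int (tt x)"
proof -
  assume xB: "x \<in> B"
  have f1: "finite (nbhd B E x)" and f2: "finite (nbhd V E x - B)" using nb_fin[OF S] by auto
  have "(\<Sum>y\<in>nbhd B E x \<union> (nbhd V E x - B). int (d y)) = (\<Sum>y\<in>nbhd B E x. int (d y)) + (\<Sum>y\<in>nbhd V E x - B. int (d y))"
    by (rule sum.union_disjoint[OF f1 f2 dj])
  then show ?thesis using un[OF xB] one by simp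
qed

lemma decomp3: "tt x > 0 \<Longrightarrow> int (d x) = kk"
proof -
  assume "tt x > 0"
  then have "nbhd V E x - B \<noteq> {}" unfolding tt_def using card_gt_0_iff by blast
  then obtain y where "y \<in> nbhd V E x - B" by blast
  then have xy: "E x y" and yV: "y \<in> V" and yB: "y \<notin> B" unfolding nbhd_def by auto
  have "d y = 1" using out_pend[OF yV yB] .
  then show "int (d x) = kk" using pend_val[OF _ sym[OF xy]] kk_def by simp
qed

lemma nb_int:
  assumes "1 \<le> i" "i \<le> p - 1"
  shows "nbhd B E (u i) = {u (i - 1), u (i + 1)}" "u (i - 1) \<noteq> u (i + 1)"
proof -
  have i: "\<And>i j. i < p \<Longrightarrow> j < p \<Longrightarrow> i \<noteq> j \<Longrightarrow> u i \<noteq> u j"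
    using uinj unfolding inj_on_def by auto
  show ne: "u (i - 1) \<noteq> u (i + 1)"
  proof (cases "i + 1 = p")
    case True
    then have "u (i + 1) = u 0" using up by simp
    then show ?thesis using i[of "i - 1" 0] assms p3 True by auto
  next
    case False
    then show ?thesis using i[of "i - 1" "i + 1"] assms p3 by auto
  qed
  have "E (u (i - 1)) (u (Suc (i - 1)))" using uE[of "i - 1"] assms p3 by auto
  then have e1: "E (u i) (u (i - 1))" using sym assms by (metis Suc_diff_1 less_le_trans zero_less_one)
  have e2: "E (u i) (u (i + 1))" using uE[of i] assms p3 by auto
  have sub: "{u (i - 1), u (i + 1)} \<subseteq> nbhd B E (u i)" using e1 e2 uB[of "i - 1"] uB[of "i + 1"] assms p3
    unfolding nbhd_def by auto
  have "card {u (i - 1), u (i + 1)} = card (nbhd B E (u i))" using ne degi[OF assms] unfolding deg_def by simp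
  then show "nbhd B E (u i) = {u (i - 1), u (i + 1)}" using card_subset_eq[OF nb_fin[OF S] sub] by simp
qed

definition "DD i = int (d (u i))"

lemma interior:
  assumes "1 \<le> i" "i \<le> p - 1"
  shows "(DD i = 2 \<or> DD i = kk) \<and> DD (i - 1) + DD (i + 1) + DD i - 2 = a * DD i + b - (DD i)^2"
proof -
  have iB: "u i \<in> B" using uB[of i] assms p3 by simp
  have iV: "u i \<in> V" using iB B_sub by auto
  have d1: "d (u i) = 2 + tt (u i)" using decomp1[OF iB] degi[OF assms] by simp
  have s: "(\<Sum>y\<in>nbhd B E (u i). int (d y)) = DD (i - 1) + DD (i + 1)"
    using nb_int[OF assms] unfolding DD_def by simp
  have e: "DD (i - 1) + DD (i + 1) + int (tt (u i)) = a * DD i + b - (DD i)^2"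
    using SG[OF iV] decomp2[OF iB] s unfolding DD_def by simp
  have c: "DD i = 2 \<or> DD i = kk"
  proof (cases "tt (u i) > 0")
    case True then show ?thesis using decomp3 unfolding DD_def by simp
  next
    case False then show ?thesis using d1 unfolding DD_def by simp
  qed
  show ?thesis using c e d1 unfolding DD_def by simp
qed

lemma vfacts: "w \<noteq> u 1" "w \<noteq> u (p - 1)" "u 1 \<noteq> u (p - 1)" "deg B E v = 3"
proof -
  have c3: "card {w, u 1, u (p - 1)} \<ge> 3" using degv u0 nbv unfolding deg_def by simp
  show "w \<noteq> u 1" using c3 by (cases "w = u 1") (auto simp: card_insert_if split: if_splits)
  show "w \<noteq> u (p - 1)" using c3 by (cases "w = u (p - 1)") (auto simp: card_insert_if split: if_splits)
  show "u 1 \<noteq> u (p - 1)" using three by simp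
  then show "deg B E v = 3" using nbv \<open>w \<noteq> u 1\<close> \<open>w \<noteq> u (p - 1)\<close> unfolding deg_def by simp
qed

lemma wfacts: "d w \<ge> 2"
proof -
  have wN: "w \<in> nbhd B E v" using nbv by simp
  then have wB: "w \<in> B" and vw: "E v w" unfolding nbhd_def by auto
  have vB: "v \<in> B" using uB[of 0] u0 by simp
  have "v \<in> nbhd B E w" using vB sym[OF vw] unfolding nbhd_def by auto
  then have "deg B E w \<noteq> 0" using nb_fin[OF S] unfolding deg_def by auto
  then have "deg B E w \<ge> 2" using B_np[OF wB] by simp
  then show ?thesis using dge[OF wB] by simp
qed

lemma AHok: "AH DD p kk a b (int (d w)) (int (tt v))"
proof -
  have vB: "v \<in> B" using uB[of 0] u0 by simp
  have vV: "v \<in> V" using three by simp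
  have d0: "DD 0 = 3 + int (tt v)" using decomp1[OF vB] vfacts(4) u0 unfolding DD_def by simp
  have k0: "int (tt v) > 0 \<longrightarrow> DD 0 = kk" using decomp3 u0 unfolding DD_def by simp
  have s: "(\<Sum>y\<in>nbhd B E v. int (d y)) = int (d w) + DD 1 + DD (p - 1)"
    using nbv vfacts unfolding DD_def by simp
  have e: "int (d w) + DD 1 + DD (p - 1) + int (tt v) = a * DD 0 + b - (DD 0)^2"
    using SG[OF vV] decomp2[OF vB] s u0 unfolding DD_def by simp
  have Dp: "DD p = DD 0" using up unfolding DD_def by simp
  show ?thesis unfolding AH_def using p3 k3 kk_def interior Dp d0 k0 wfacts e by auto
qed


end

theorem lemma3p1:
  fixes a b :: int and V :: "'a set" and E :: "'a \<Rightarrow> 'a \<Rightarrow> bool"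
    and B :: "'a set" and u :: "nat \<Rightarrow> 'a" and p :: nat and v w :: 'a
  assumes "in_G_ab a b V E"
    and "tricyclic V E"
    and "\<exists>x\<in>V. pendant V E x"
    and "is_base V E B"
    and "internal_cycle B E u p"
    and "u 0 = v"
    and "nbhd B E v = {w, u 1, u (p - 1)}"
  shows "deg V E v = 3 \<and> p = 3 \<and> in_G_ab 6 (-1) V E \<and> deg V E w = 2
    \<and> ((deg V E (u 1) = 2 \<and> int (deg V E (u (p - 1))) = a + b - 1)
       \<or> (deg V E (u (p - 1)) = 2 \<and> int (deg V E (u 1)) = a + b - 1))
    \<and> a + b - 1 = 4"
proof -
  interpret cfg a b V E B u p v w
    using assms by (unfold_locales) auto
  note M = AH_main[OF AHok]
  have ab: "a = 6" "b = -1" using M by auto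
  have "deg V E v = 3" using M u0 unfolding DD_def by simp
  moreover have "p = 3" using M by simp
  moreover have "in_G_ab 6 (-1) V E" using assms(1) ab by simp
  moreover have "deg V E w = 2" using M by simp
  moreover have "(deg V E (u 1) = 2 \<and> int (deg V E (u (p - 1))) = a + b - 1)
       \<or> (deg V E (u (p - 1)) = 2 \<and> int (deg V E (u 1)) = a + b - 1)"
    using M ab unfolding DD_def by auto
  ultimately show ?thesis using ab by simp
qed

end
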